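(* Let $a\ge7$ be an odd integer and $M_a=(4,6,a,a+2)$. Then $$I_{M_a}=\mathrm{rad}\big(x_2^{a-2}-x_1^{a-4}x_4^2,\;x_3^{a-2}-x_1^2x_4^{a-4},\;x_1x_4-x_2x_3,\;x_1^{a+2}-x_4^4,\;x_4^2-x_1x_3^2\big)$$ in $K[x_1,x_2,x_3,x_4]$, for any field $K$.
   Context: For a $1\times n$ integer row matrix $M=(a_1,\dots,a_n)$ (positive entries), the toric ideal $I_M\subseteq K[x_1,\dots,x_n]$ is the kernel of $K[x_1,\dots,x_n]\to K[t]$, $x_i\mapsto t^{a_i}$ (the ideal of the monomial curve $(t^{a_1},\dots,t^{a_n})$). *)

theory Defs
  imports "HOL-Library.Poly_Mapping" "HOL-Computational_Algebra.Polynomial"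
begin

datatype var = X1 | X2 | X3 | X4

type_synonym 'k mpoly4 = "(var \<Rightarrow>\<^sub>0 nat) \<Rightarrow>\<^sub>0 'k"

definition Var :: "var \<Rightarrow> 'k::comm_ring_1 mpoly4" where
  "Var v = Poly_Mapping.single (Poly_Mapping.single v 1) 1"

definition gen_ideal :: "'r::comm_ring_1 set \<Rightarrow> 'r set" where
  "gen_ideal G = {p. \<exists>c. p = (\<Sum>g\<in>G. c g * g)}"

definition radical :: "'r::comm_ring_1 set \<Rightarrow> 'r set" where
  "radical I = {p. \<exists>n. p ^ n \<in> I}"

text \<open>The K-algebra map K[x1..x4] -> K[t], x_i |-> t^(w x_i).\<close>
definition monomial_subst :: "(var \<Rightarrow> nat) \<Rightarrow> 'k::comm_ring_1 mpoly4 \<Rightarrow> 'k poly" where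
  "monomial_subst w p =
     (\<Sum>m\<in>Poly_Mapping.keys p. monom (Poly_Mapping.lookup p m)
        (\<Sum>v\<in>{X1, X2, X3, X4}. Poly_Mapping.lookup m v * w v))"

text \<open>Toric ideal of the 1 x 4 matrix (w X1, w X2, w X3, w X4): the kernel.\<close>
definition toric_ideal :: "(var \<Rightarrow> nat) \<Rightarrow> 'k::comm_ring_1 mpoly4 set" where
  "toric_ideal w = {p. monomial_subst w p = 0}"

end

theory Submission
  imports Defs
begin

lemma gen_idealI: "p = (\<Sum>g\<in>G. c g * g) \<Longrightarrow> p \<in> gen_ideal G"
  unfolding gen_ideal_def by blast

lemma gen_ideal_0: "finite G \<Longrightarrow> 0 \<in> gen_ideal G"
  unfolding gen_ideal_def by (rule CollectI, rule exI[of _ "\<lambda>_. 0"]) simp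

lemma gen_ideal_add: "p \<in> gen_ideal G \<Longrightarrow> q \<in> gen_ideal G \<Longrightarrow> p + q \<in> gen_ideal G"
proof -
  assume "p \<in> gen_ideal G" "q \<in> gen_ideal G"
  then obtain c d where "p = (\<Sum>g\<in>G. c g * g)" "q = (\<Sum>g\<in>G. d g * g)"
    unfolding gen_ideal_def by blast
  then have "p + q = (\<Sum>g\<in>G. (c g + d g) * g)"
    by (simp add: sum.distrib distrib_right)
  then show ?thesis by (rule gen_idealI)
qed

lemma gen_ideal_mult: "p \<in> gen_ideal G \<Longrightarrow> r * p \<in> gen_ideal G"
proof -
  assume "p \<in> gen_ideal G"
  then obtain c where "p = (\<Sum>g\<in>G. c g * g)"
    unfolding gen_ideal_def by blast
  then have "r * p = (\<Sum>g\<in>G. (r * c g) * g)"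
    by (simp add: sum_distrib_left mult.assoc)
  then show ?thesis by (rule gen_idealI)
qed

lemma gen_ideal_base: "finite G \<Longrightarrow> g \<in> G \<Longrightarrow> g \<in> gen_ideal G"
proof -
  assume "finite G" "g \<in> G"
  have "(\<Sum>h\<in>G. (if h = g then 1 else 0) * h) = (\<Sum>h\<in>G. if h = g then h else 0)"
    by (rule sum.cong) auto
  also have "\<dots> = g" using \<open>finite G\<close> \<open>g \<in> G\<close> by (simp add: sum.delta')
  finally show ?thesis by (intro gen_idealI) (rule sym)
qed

lemma gen_ideal_sum: "finite G \<Longrightarrow> finite A \<Longrightarrow> (\<And>x. x \<in> A \<Longrightarrow> f x \<in> gen_ideal G) \<Longrightarrow> sum f A \<in> gen_ideal G"
proof -
  assume G: "finite G" and A: "finite A" and f: "\<And>x. x \<in> A \<Longrightarrow> f x \<in> gen_ideal G"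
  from A f show ?thesis
    by (induction A rule: finite_induct) (auto intro: gen_ideal_0[OF G] gen_ideal_add)
qed

lemma gen_ideal_insert:
  assumes "finite G" "p \<in> gen_ideal (insert y G)"
  shows "\<exists>k q. q \<in> gen_ideal G \<and> p = k * y + q"
proof (cases "y \<in> G")
  case True
  then have "p \<in> gen_ideal G" using assms by (simp add: insert_absorb)
  then show ?thesis by (intro exI[of _ 0] exI[of _ p]) simp
next
  case False
  obtain c where "p = (\<Sum>g\<in>insert y G. c g * g)" using assms unfolding gen_ideal_def by blast
  then have "p = c y * y + (\<Sum>g\<in>G. c g * g)" using False assms by simp
  moreover have "(\<Sum>g\<in>G. c g * g) \<in> gen_ideal G" by (rule gen_idealI) (rule refl)
  ultimately show ?thesis by blast
qed

lemma gen_ideal_mono_insert: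
  assumes "finite G" "p \<in> gen_ideal G"
  shows "p \<in> gen_ideal (insert y G)"
proof -
  obtain c where c: "p = (\<Sum>g\<in>G. c g * g)" using assms unfolding gen_ideal_def by blast
  have "p = (\<Sum>g\<in>insert y G. (if g \<in> G then c g else 0) * g)"
    using assms(1) c by (cases "y \<in> G") (simp_all add: insert_absorb cong: sum.cong)
  then show ?thesis by (rule gen_idealI)
qed

abbreviation Rad where "Rad G \<equiv> radical (gen_ideal G)"

lemma rad_base: "p \<in> gen_ideal G \<Longrightarrow> p \<in> Rad G"
  unfolding radical_def by (rule CollectI, rule exI[of _ 1]) simp

lemma rad_gen: "finite G \<Longrightarrow> g \<in> G \<Longrightarrow> g \<in> Rad G"
  by (intro rad_base gen_ideal_base)

lemma rad_mult: "p \<in> Rad G \<Longrightarrow> r * p \<in> Rad G"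
proof -
  assume "p \<in> Rad G"
  then obtain n where "p ^ n \<in> gen_ideal G" unfolding radical_def by blast
  then have "(r * p) ^ n \<in> gen_ideal G" by (simp add: power_mult_distrib gen_ideal_mult)
  then show ?thesis unfolding radical_def by blast
qed

lemma rad_mult2: "p \<in> Rad G \<Longrightarrow> p * r \<in> Rad G"
  using rad_mult[of p G r] by (simp add: mult.commute)

lemma rad_add:
  assumes G: "finite G" and "p \<in> Rad G" "q \<in> Rad G"
  shows "p + q \<in> Rad G"
proof -
  obtain n where n: "p ^ n \<in> gen_ideal G" using assms unfolding radical_def by blast
  obtain m where m: "q ^ m \<in> gen_ideal G" using assms unfolding radical_def by blast
  have "(p + q) ^ (n + m) = (\<Sum>k\<le>n+m. of_nat ((n+m) choose k) * p ^ k * q ^ (n + m - k))"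
    by (rule binomial_ring)
  also have "\<dots> \<in> gen_ideal G"
  proof (rule gen_ideal_sum[OF G])
    fix k assume "k \<in> {..n+m}"
    show "of_nat ((n+m) choose k) * p ^ k * q ^ (n + m - k) \<in> gen_ideal G"
    proof (cases "n \<le> k")
      case True
      then have "p ^ k = p ^ (k - n) * p ^ n" by (simp add: power_add[symmetric])
      then show ?thesis using gen_ideal_mult[OF n, of "of_nat ((n+m) choose k) * q ^ (n + m - k) * p ^ (k - n)"]
        by (simp add: ac_simps)
    next
      case False
      then have "q ^ (n + m - k) = q ^ (n - k) * q ^ m" by (simp add: power_add[symmetric])
      then show ?thesis using gen_ideal_mult[OF m, of "of_nat ((n+m) choose k) * p ^ k * q ^ (n - k)"]
        by (simp add: ac_simps)
    qed
  qed simp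
  finally show ?thesis unfolding radical_def by blast
qed

lemma rad_uminus: "p \<in> Rad G \<Longrightarrow> - p \<in> Rad G"
  using rad_mult[of p G "-1"] by simp

lemma rad_diff: "finite G \<Longrightarrow> p \<in> Rad G \<Longrightarrow> q \<in> Rad G \<Longrightarrow> p - q \<in> Rad G"
  using rad_add[of G p "- q"] rad_uminus[of q G] by simp

lemma rad_rad: "p ^ k \<in> Rad G \<Longrightarrow> p \<in> Rad G"
proof -
  assume "p ^ k \<in> Rad G"
  then obtain n where "(p ^ k) ^ n \<in> gen_ideal G" unfolding radical_def by blast
  then have "p ^ (k * n) \<in> gen_ideal G" by (simp add: power_mult)
  then show ?thesis unfolding radical_def by blast
qed

lemma rad_pow: "p \<in> Rad G \<Longrightarrow> 0 < k \<Longrightarrow> p ^ k \<in> Rad G"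
proof -
  assume "p \<in> Rad G" "0 < k"
  then have "p ^ k = p ^ (k - 1) * p" by (simp add: power_Suc2[symmetric])
  then show ?thesis using rad_mult[OF \<open>p \<in> Rad G\<close>, of "p ^ (k - 1)"] by simp
qed

lemma rad_mono_insert: "finite G \<Longrightarrow> p \<in> Rad G \<Longrightarrow> p \<in> Rad (insert y G)"
  unfolding radical_def using gen_ideal_mono_insert by blast

lemma rad_power_diff:
  assumes G: "finite G" and "u - v \<in> Rad G"
  shows "u ^ n - v ^ n \<in> Rad G"
proof (induction n)
  case 0 then show ?case using rad_base[OF gen_ideal_0[OF G]] by simp
next
  case (Suc n)
  have "u ^ Suc n - v ^ Suc n = u * (u ^ n - v ^ n) + v ^ n * (u - v)"
    by (simp add: algebra_simps)
  then show ?case using rad_add[OF G rad_mult[OF Suc] rad_mult[OF assms(2)]] by simp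
qed

lemma key:
  assumes G: "finite G" and f: "f \<in> Rad (insert y G)" and yf: "y ^ k * f \<in> Rad G" and k: "0 < k"
  shows "f \<in> Rad G"
proof -
  obtain m where "f ^ m \<in> gen_ideal (insert y G)" using f unfolding radical_def by blast
  then obtain c q where q: "q \<in> gen_ideal G" and fm: "f ^ m = c * y + q"
    using gen_ideal_insert[OF G] by blast
  have "f ^ k = f * f ^ (k - 1)" using k by (simp add: power_Suc[symmetric])
  then have "(y * f) ^ k = (y ^ k * f) * f ^ (k - 1)"
    by (simp add: power_mult_distrib ac_simps)
  then have "(y * f) ^ k \<in> Rad G" using rad_mult2[OF yf] by simp
  then have yf1: "y * f \<in> Rad G" by (rule rad_rad)
  have "f ^ Suc m = c * (y * f) + f * q" using fm by (simp add: algebra_simps)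
  also have "\<dots> \<in> Rad G" using rad_add[OF G rad_mult[OF yf1] rad_mult[OF rad_base[OF q]]] .
  finally show ?thesis by (rule rad_rad)
qed

locale rels =
  fixes x1 x2 x3 x4 :: "'r::comm_ring_1" and c :: nat
begin

definition GG :: "'r set" where
  "GG = { x2 ^ (2*c+5) - x1 ^ (2*c+3) * x4 ^ 2,
          x3 ^ (2*c+5) - x1 ^ 2 * x4 ^ (2*c+3),
          x1 * x4 - x2 * x3,
          x1 ^ (2*c+9) - x4 ^ 4,
          x4 ^ 2 - x1 * x3 ^ 2 }"

abbreviation "J \<equiv> Rad GG"

lemma finG: "finite GG" by (simp add: GG_def)

lemma g1: "x2 ^ (2*c+5) - x1 ^ (2*c+3) * x4 ^ 2 \<in> J" by (rule rad_gen[OF finG]) (simp add: GG_def)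
lemma g2: "x3 ^ (2*c+5) - x1 ^ 2 * x4 ^ (2*c+3) \<in> J" by (rule rad_gen[OF finG]) (simp add: GG_def)
lemma g3: "x1 * x4 - x2 * x3 \<in> J" by (rule rad_gen[OF finG]) (simp add: GG_def)
lemma g4: "x1 ^ (2*c+9) - x4 ^ 4 \<in> J" by (rule rad_gen[OF finG]) (simp add: GG_def)
lemma g5: "x4 ^ 2 - x1 * x3 ^ 2 \<in> J" by (rule rad_gen[OF finG]) (simp add: GG_def)

lemmas Jadd = rad_add[OF finG]
lemmas Jdiff = rad_diff[OF finG]

lemma Jeq: "p \<in> J \<Longrightarrow> p = q \<Longrightarrow> q \<in> J" by simp

lemma gI: "finite (insert y GG) \<and> (\<forall>g\<in>GG. g \<in> Rad (insert y GG))"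
  using finG by (auto intro: rad_gen)

lemma A: "x2 ^ 2 - x1 ^ 3 \<in> J"
proof (rule key[OF finG, of _ x3 2])
  let ?R = "Rad (insert x3 GG)"
  have fin: "finite (insert x3 GG)" using finG by simp
  have gen: "g \<in> ?R" if "g \<in> GG" for g using that fin by (intro rad_gen) auto
  have y: "x3 \<in> ?R" using fin by (intro rad_gen) auto
  have "x4 ^ 2 = (x4 ^ 2 - x1 * x3 ^ 2) + (x1 * x3) * x3" by (simp add: power2_eq_square ac_simps)
  also have "\<dots> \<in> ?R" using gen[of "x4 ^ 2 - x1 * x3 ^ 2"] rad_add[OF fin _ rad_mult[OF y]]
    by (simp add: GG_def)
  finally have x4: "x4 \<in> ?R" by (rule rad_rad)
  have "x1 ^ (2*c+9) = (x1 ^ (2*c+9) - x4 ^ 4) + x4 ^ 3 * x4" by (simp add: power_Suc2[symmetric])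
  also have "\<dots> \<in> ?R" using gen[of "x1 ^ (2*c+9) - x4 ^ 4"] rad_add[OF fin _ rad_mult[OF x4]]
    by (simp add: GG_def)
  finally have x1: "x1 \<in> ?R" by (rule rad_rad)
  have "x2 ^ (2*c+5) = (x2 ^ (2*c+5) - x1 ^ (2*c+3) * x4 ^ 2) + (x1 ^ (2*c+3) * x4) * x4" by (simp add: power2_eq_square ac_simps)
  also have "\<dots> \<in> ?R" using gen[of "x2 ^ (2*c+5) - x1 ^ (2*c+3) * x4 ^ 2"] rad_add[OF fin _ rad_mult[OF x4]]
    by (simp add: GG_def)
  finally have x2: "x2 \<in> ?R" by (rule rad_rad)
  show "x2 ^ 2 - x1 ^ 3 \<in> ?R" using rad_diff[OF fin rad_pow[OF x2] rad_pow[OF x1]] by simp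
  have "x3 ^ 2 * (x2 ^ 2 - x1 ^ 3) = (- (x1 * x4 - x2 * x3)) * (x2 * x3 + x1 * x4) + x1 ^ 2 * (x4 ^ 2 - x1 * x3 ^ 2)"
    by (simp add: algebra_simps power2_eq_square power3_eq_cube)
  also have "\<dots> \<in> J" using Jadd[OF rad_mult2[OF rad_uminus[OF g3]] rad_mult[OF g5]] .
  finally show "x3 ^ 2 * (x2 ^ 2 - x1 ^ 3) \<in> J" .
qed simp

lemma nil1: "x1 \<in> Rad (insert x1 GG) \<and> x3 \<in> Rad (insert x1 GG) \<and> x4 \<in> Rad (insert x1 GG)"
proof -
  let ?R = "Rad (insert x1 GG)"
  have fin: "finite (insert x1 GG)" using finG by simp
  have gen: "g \<in> ?R" if "g \<in> GG" for g using that fin by (intro rad_gen) auto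
  have y: "x1 \<in> ?R" using fin by (intro rad_gen) auto
  have "x4 ^ 4 = x1 ^ (2*c+8) * x1 - (x1 ^ (2*c+9) - x4 ^ 4)" by (simp add: algebra_simps power_add power_mult numeral_eq_Suc)
  also have "\<dots> \<in> ?R" using gen[of "x1 ^ (2*c+9) - x4 ^ 4"] rad_diff[OF fin rad_mult[OF y]]
    by (simp add: GG_def)
  finally have x4: "x4 \<in> ?R" by (rule rad_rad)
  have "x3 ^ (2*c+5) = (x3 ^ (2*c+5) - x1 ^ 2 * x4 ^ (2*c+3)) + (x1 * x4 ^ (2*c+3)) * x1" by (simp add: power2_eq_square ac_simps)
  also have "\<dots> \<in> ?R" using gen[of "x3 ^ (2*c+5) - x1 ^ 2 * x4 ^ (2*c+3)"] rad_add[OF fin _ rad_mult[OF y]]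
    by (simp add: GG_def)
  finally have x3: "x3 \<in> ?R" by (rule rad_rad)
  show ?thesis using x3 x4 y by blast
qed

lemma F: "x2 * x4 - x1 ^ 2 * x3 \<in> J"
proof (rule key[OF finG, of _ x1 1])
  have fin: "finite (insert x1 GG)" using finG by simp
  show "x2 * x4 - x1 ^ 2 * x3 \<in> Rad (insert x1 GG)"
    using nil1 rad_diff[OF fin rad_mult[of x4 _ x2] rad_mult[of x3 _ "x1 ^ 2"]] by blast
  have "x1 ^ 1 * (x2 * x4 - x1 ^ 2 * x3) = x2 * (x1 * x4 - x2 * x3) + x3 * (x2 ^ 2 - x1 ^ 3)"
    by (simp add: algebra_simps power2_eq_square power3_eq_cube)
  also have "\<dots> \<in> J" using Jadd[OF rad_mult[OF g3] rad_mult[OF A]] .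
  finally show "x1 ^ 1 * (x2 * x4 - x1 ^ 2 * x3) \<in> J" .
qed simp

lemma B: "x3 ^ 2 - x1 ^ (c+2) * x2 \<in> J"
proof (rule key[OF finG, of _ x1 "2*c+4"])
  have fin: "finite (insert x1 GG)" using finG by simp
  have "x3 ^ 2 - x1 ^ (c+2) * x2 = x3 * x3 - (x1 ^ (c+1) * x2) * x1" by (simp add: power2_eq_square ac_simps)
  also have "\<dots> \<in> Rad (insert x1 GG)"
    using nil1 rad_diff[OF fin rad_mult[of x3 _ x3] rad_mult[of x1 _ "x1 ^ (c+1) * x2"]] by (simp add: ac_simps)
  finally show "x3 ^ 2 - x1 ^ (c+2) * x2 \<in> Rad (insert x1 GG)" .
  have pd: "(x2 ^ 2) ^ (c+2) - (x1 ^ 3) ^ (c+2) \<in> J" by (rule rad_power_diff[OF finG A])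
  have e1: "x1 ^ (2*c+4) * (x3 ^ 2 - x1 ^ (c+2) * x2) =
     x1 ^ (2*c+3) * (- (x4 ^ 2 - x1 * x3 ^ 2)) + (x1 ^ (2*c+3) * x4 ^ 2 - x1 ^ (3*c+6) * x2)"
    by (simp add: algebra_simps power_add power_mult numeral_eq_Suc)
  have e2: "x1 ^ (2*c+3) * x4 ^ 2 - x1 ^ (3*c+6) * x2 =
     - (x2 ^ (2*c+5) - x1 ^ (2*c+3) * x4 ^ 2) + x2 * ((x2 ^ 2) ^ (c+2) - (x1 ^ 3) ^ (c+2))"
    by (simp add: algebra_simps power_add power_mult numeral_eq_Suc)
  have "x1 ^ (2*c+3) * x4 ^ 2 - x1 ^ (3*c+6) * x2 \<in> J"
    unfolding e2 using Jadd[OF rad_uminus[OF g1] rad_mult[OF pd]] .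
  then show "x1 ^ (2*c+4) * (x3 ^ 2 - x1 ^ (c+2) * x2) \<in> J"
    unfolding e1 using Jadd[OF rad_mult[OF rad_uminus[OF g5]]] by blast
qed simp

lemma E: "x3 * x4 - x1 ^ (c+4) \<in> J"
proof (rule key[OF finG, of _ x1 1])
  have fin: "finite (insert x1 GG)" using finG by simp
  have "x3 * x4 - x1 ^ (c+4) = x3 * x4 - x1 ^ (c+3) * x1" by (simp add: algebra_simps power_add power_mult numeral_eq_Suc)
  also have "\<dots> \<in> Rad (insert x1 GG)"
    using nil1 rad_diff[OF fin rad_mult[of x4 _ x3] rad_mult[of x1 _ "x1 ^ (c+3)"]] by blast
  finally show "x3 * x4 - x1 ^ (c+4) \<in> Rad (insert x1 GG)" .
  have "x1 ^ 1 * (x3 * x4 - x1 ^ (c+4)) = x3 * (x1 * x4 - x2 * x3) + x2 * (x3 ^ 2 - x1 ^ (c+2) * x2) + x1 ^ (c+2) * (x2 ^ 2 - x1 ^ 3)"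
    by (simp add: algebra_simps power_add power_mult numeral_eq_Suc)
  also have "\<dots> \<in> J" using Jadd[OF Jadd[OF rad_mult[OF g3] rad_mult[OF B]] rad_mult[OF A]] .
  finally show "x1 ^ 1 * (x3 * x4 - x1 ^ (c+4)) \<in> J" .
qed simp

lemma C: "x4 ^ 2 - x1 ^ (c+3) * x2 \<in> J"
proof -
  have "x4 ^ 2 - x1 ^ (c+3) * x2 = (x4 ^ 2 - x1 * x3 ^ 2) + x1 * (x3 ^ 2 - x1 ^ (c+2) * x2)"
    by (simp add: algebra_simps power_add power_mult numeral_eq_Suc)
  also have "\<dots> \<in> J" using Jadd[OF g5 rad_mult[OF B]] .
  finally show ?thesis .
qed

end

context rels
begin

lemma J0: "0 \<in> J" by (rule rad_base[OF gen_ideal_0[OF finG]])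

definition tt :: "nat \<Rightarrow> 'r" where
  "tt t = (if t = 0 then 1 else if t = 1 then x2 else if t = 2 then x3 else x4)"

definition cw :: "nat \<Rightarrow> nat" where
  "cw t = (if t = 0 then 0 else if t = 1 then 6 else if t = 2 then 2*c+7 else 2*c+9)"

definition Q :: "'r \<Rightarrow> nat \<Rightarrow> bool" where
  "Q p d \<longleftrightarrow> (\<exists>i t. t < 4 \<and> p - x1 ^ i * tt t \<in> J \<and> d = 4 * i + cw t)"

lemma Q_stepI:
  assumes "p - x1 ^ i * tt t \<in> J" "d = 4 * i + cw t" "tt t * x - x1 ^ e * tt t' \<in> J"
    "t' < 4" "d + w = 4 * (i + e) + cw t'"
  shows "Q (p * x) (d + w)"
proof -
  have "p * x - x1 ^ (i + e) * tt t' = (p - x1 ^ i * tt t) * x + x1 ^ i * (tt t * x - x1 ^ e * tt t')"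
    by (simp add: algebra_simps power_add)
  also have "\<dots> \<in> J" using Jadd[OF rad_mult2[OF assms(1)] rad_mult[OF assms(3)]] .
  finally show ?thesis unfolding Q_def using assms(4,5) by blast
qed

lemma Q_x1: assumes "Q p d" shows "Q (p * x1) (d + (4))"
proof -
  obtain i t where i: "t < 4" "p - x1 ^ i * tt t \<in> J" and d: "d = 4 * i + cw t" using assms unfolding Q_def by blast
  have "t = 0 \<or> t = 1 \<or> t = 2 \<or> t = 3" using i(1) by arith
  then show ?thesis
  proof (elim disjE)
    assume 0123: "t = 0"
    have fact: "tt 0 * x1 - x1 ^ (1) * tt 0 \<in> J" using J0 by (simp add: tt_def power2_eq_square ac_simps)
    have h: "p - x1 ^ i * tt 0 \<in> J" "d = 4 * i + cw 0" using i(2) d unfolding 0123 by blast+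
    show ?thesis by (rule Q_stepI[OF h fact]) (simp_all add: cw_def h(2))
  next
    assume 0123: "t = 1"
    have fact: "tt 1 * x1 - x1 ^ (1) * tt 1 \<in> J" using J0 by (simp add: tt_def power2_eq_square ac_simps)
    have h: "p - x1 ^ i * tt 1 \<in> J" "d = 4 * i + cw 1" using i(2) d unfolding 0123 by blast+
    show ?thesis by (rule Q_stepI[OF h fact]) (simp_all add: cw_def h(2))
  next
    assume 0123: "t = 2"
    have fact: "tt 2 * x1 - x1 ^ (1) * tt 2 \<in> J" using J0 by (simp add: tt_def power2_eq_square ac_simps)
    have h: "p - x1 ^ i * tt 2 \<in> J" "d = 4 * i + cw 2" using i(2) d unfolding 0123 by blast+
    show ?thesis by (rule Q_stepI[OF h fact]) (simp_all add: cw_def h(2))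
  next
    assume 0123: "t = 3"
    have fact: "tt 3 * x1 - x1 ^ (1) * tt 3 \<in> J" using J0 by (simp add: tt_def power2_eq_square ac_simps)
    have h: "p - x1 ^ i * tt 3 \<in> J" "d = 4 * i + cw 3" using i(2) d unfolding 0123 by blast+
    show ?thesis by (rule Q_stepI[OF h fact]) (simp_all add: cw_def h(2))
  qed
qed

lemma Q_x2: assumes "Q p d" shows "Q (p * x2) (d + (6))"
proof -
  obtain i t where i: "t < 4" "p - x1 ^ i * tt t \<in> J" and d: "d = 4 * i + cw t" using assms unfolding Q_def by blast
  have "t = 0 \<or> t = 1 \<or> t = 2 \<or> t = 3" using i(1) by arith
  then show ?thesis
  proof (elim disjE)
    assume 0123: "t = 0"
    have fact: "tt 0 * x2 - x1 ^ (0) * tt 1 \<in> J" using J0 by (simp add: tt_def power2_eq_square ac_simps)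
    have h: "p - x1 ^ i * tt 0 \<in> J" "d = 4 * i + cw 0" using i(2) d unfolding 0123 by blast+
    show ?thesis by (rule Q_stepI[OF h fact]) (simp_all add: cw_def h(2))
  next
    assume 0123: "t = 1"
    have fact: "tt 1 * x2 - x1 ^ (3) * tt 0 \<in> J" using A by (simp add: tt_def power2_eq_square ac_simps)
    have h: "p - x1 ^ i * tt 1 \<in> J" "d = 4 * i + cw 1" using i(2) d unfolding 0123 by blast+
    show ?thesis by (rule Q_stepI[OF h fact]) (simp_all add: cw_def h(2))
  next
    assume 0123: "t = 2"
    have fact: "tt 2 * x2 - x1 ^ (1) * tt 3 \<in> J" using rad_uminus[OF g3] by (simp add: tt_def power2_eq_square ac_simps)
    have h: "p - x1 ^ i * tt 2 \<in> J" "d = 4 * i + cw 2" using i(2) d unfolding 0123 by blast+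
    show ?thesis by (rule Q_stepI[OF h fact]) (simp_all add: cw_def h(2))
  next
    assume 0123: "t = 3"
    have fact: "tt 3 * x2 - x1 ^ (2) * tt 2 \<in> J" using F by (simp add: tt_def power2_eq_square ac_simps)
    have h: "p - x1 ^ i * tt 3 \<in> J" "d = 4 * i + cw 3" using i(2) d unfolding 0123 by blast+
    show ?thesis by (rule Q_stepI[OF h fact]) (simp_all add: cw_def h(2))
  qed
qed

lemma Q_x3: assumes "Q p d" shows "Q (p * x3) (d + (2*c+7))"
proof -
  obtain i t where i: "t < 4" "p - x1 ^ i * tt t \<in> J" and d: "d = 4 * i + cw t" using assms unfolding Q_def by blast
  have "t = 0 \<or> t = 1 \<or> t = 2 \<or> t = 3" using i(1) by arith
  then show ?thesis
  proof (elim disjE)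
    assume 0123: "t = 0"
    have fact: "tt 0 * x3 - x1 ^ (0) * tt 2 \<in> J" using J0 by (simp add: tt_def power2_eq_square ac_simps)
    have h: "p - x1 ^ i * tt 0 \<in> J" "d = 4 * i + cw 0" using i(2) d unfolding 0123 by blast+
    show ?thesis by (rule Q_stepI[OF h fact]) (simp_all add: cw_def h(2))
  next
    assume 0123: "t = 1"
    have fact: "tt 1 * x3 - x1 ^ (1) * tt 3 \<in> J" using rad_uminus[OF g3] by (simp add: tt_def power2_eq_square ac_simps)
    have h: "p - x1 ^ i * tt 1 \<in> J" "d = 4 * i + cw 1" using i(2) d unfolding 0123 by blast+
    show ?thesis by (rule Q_stepI[OF h fact]) (simp_all add: cw_def h(2))
  next
    assume 0123: "t = 2"
    have fact: "tt 2 * x3 - x1 ^ (c+2) * tt 1 \<in> J" using B by (simp add: tt_def power2_eq_square ac_simps)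
    have h: "p - x1 ^ i * tt 2 \<in> J" "d = 4 * i + cw 2" using i(2) d unfolding 0123 by blast+
    show ?thesis by (rule Q_stepI[OF h fact]) (simp_all add: cw_def h(2))
  next
    assume 0123: "t = 3"
    have fact: "tt 3 * x3 - x1 ^ (c+4) * tt 0 \<in> J" using E by (simp add: tt_def power2_eq_square ac_simps)
    have h: "p - x1 ^ i * tt 3 \<in> J" "d = 4 * i + cw 3" using i(2) d unfolding 0123 by blast+
    show ?thesis by (rule Q_stepI[OF h fact]) (simp_all add: cw_def h(2))
  qed
qed

lemma Q_x4: assumes "Q p d" shows "Q (p * x4) (d + (2*c+9))"
proof -
  obtain i t where i: "t < 4" "p - x1 ^ i * tt t \<in> J" and d: "d = 4 * i + cw t" using assms unfolding Q_def by blast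
  have "t = 0 \<or> t = 1 \<or> t = 2 \<or> t = 3" using i(1) by arith
  then show ?thesis
  proof (elim disjE)
    assume 0123: "t = 0"
    have fact: "tt 0 * x4 - x1 ^ (0) * tt 3 \<in> J" using J0 by (simp add: tt_def power2_eq_square ac_simps)
    have h: "p - x1 ^ i * tt 0 \<in> J" "d = 4 * i + cw 0" using i(2) d unfolding 0123 by blast+
    show ?thesis by (rule Q_stepI[OF h fact]) (simp_all add: cw_def h(2))
  next
    assume 0123: "t = 1"
    have fact: "tt 1 * x4 - x1 ^ (2) * tt 2 \<in> J" using F by (simp add: tt_def power2_eq_square ac_simps)
    have h: "p - x1 ^ i * tt 1 \<in> J" "d = 4 * i + cw 1" using i(2) d unfolding 0123 by blast+
    show ?thesis by (rule Q_stepI[OF h fact]) (simp_all add: cw_def h(2))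
  next
    assume 0123: "t = 2"
    have fact: "tt 2 * x4 - x1 ^ (c+4) * tt 0 \<in> J" using E by (simp add: tt_def power2_eq_square ac_simps)
    have h: "p - x1 ^ i * tt 2 \<in> J" "d = 4 * i + cw 2" using i(2) d unfolding 0123 by blast+
    show ?thesis by (rule Q_stepI[OF h fact]) (simp_all add: cw_def h(2))
  next
    assume 0123: "t = 3"
    have fact: "tt 3 * x4 - x1 ^ (c+3) * tt 1 \<in> J" using C by (simp add: tt_def power2_eq_square ac_simps)
    have h: "p - x1 ^ i * tt 3 \<in> J" "d = 4 * i + cw 3" using i(2) d unfolding 0123 by blast+
    show ?thesis by (rule Q_stepI[OF h fact]) (simp_all add: cw_def h(2))
  qed
qed


lemma Q_cong: "Q p d \<Longrightarrow> p = p' \<Longrightarrow> d = d' \<Longrightarrow> Q p' d'" by simp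

lemma Q_mono: "Q (x1 ^ i * x2 ^ j * x3 ^ k * x4 ^ l) (4 * i + 6 * j + (2*c+7) * k + (2*c+9) * l)"
proof (induction l)
  case 0
  show ?case
  proof (induction k)
    case 0
    show ?case
    proof (induction j)
      case 0
      show ?case
      proof (induction i)
        case 0
        show ?case unfolding Q_def
          by (rule exI[of _ 0], rule exI[of _ 0]) (simp add: tt_def cw_def J0)
      next
        case (Suc i)
        then show ?case using Q_x1[OF Suc] by (auto intro: Q_cong simp: ac_simps)
      qed
    next
      case (Suc j)
      then show ?case using Q_x2[OF Suc] by (auto intro: Q_cong simp: ac_simps)
    qed
  next
    case (Suc k)
    then show ?case using Q_x3[OF Suc] by (auto intro: Q_cong simp: algebra_simps)
  qed
next
  case (Suc l)
  then show ?case using Q_x4[OF Suc] by (auto intro: Q_cong simp: algebra_simps)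
qed

definition Ef :: "nat \<Rightarrow> 'r" where
  "Ef d = (if d mod 4 = 0 then x1 ^ (d div 4)
           else if d mod 4 = 2 then x1 ^ ((d - 6) div 4) * x2
           else if d mod 4 = (2*c+7) mod 4 then x1 ^ ((d - (2*c+7)) div 4) * x3
           else x1 ^ ((d - (2*c+9)) div 4) * x4)"

lemma Ef_std: "t < 4 \<Longrightarrow> Ef (4 * i + cw t) = x1 ^ i * tt t"
proof -
  assume "t < 4"
  then have "t = 0 \<or> t = 1 \<or> t = 2 \<or> t = 3" by arith
  moreover have "(4 * i + (2*c+7)) mod 4 \<noteq> 0 \<and> (4 * i + (2*c+7)) mod 4 \<noteq> 2 \<and>
      (4 * i + (2*c+7)) mod 4 = (2*c+7) mod 4" by presburger
  moreover have "(4 * i + (2*c+9)) mod 4 \<noteq> 0 \<and> (4 * i + (2*c+9)) mod 4 \<noteq> 2 \<and>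
      (4 * i + (2*c+9)) mod 4 \<noteq> (2*c+7) mod 4" by presburger
  moreover have "(4 * i + 6) mod 4 = 2" by presburger
  ultimately show ?thesis by (auto simp: Ef_def tt_def cw_def)
qed

lemma Q_Ef: "Q p d \<Longrightarrow> p - Ef d \<in> J"
  unfolding Q_def using Ef_std by auto

lemma mono_Ef: "x1 ^ i * x2 ^ j * x3 ^ k * x4 ^ l - Ef (4 * i + 6 * j + (2*c+7) * k + (2*c+9) * l) \<in> J"
  by (rule Q_Ef[OF Q_mono])

end

definition deg :: "(var \<Rightarrow> nat) \<Rightarrow> (var \<Rightarrow>\<^sub>0 nat) \<Rightarrow> nat" where
  "deg w m = (\<Sum>v\<in>{X1, X2, X3, X4}. Poly_Mapping.lookup m v * w v)"

lemma ms_def2: "monomial_subst w p = (\<Sum>m\<in>Poly_Mapping.keys p. monom (Poly_Mapping.lookup p m) (deg w m))"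
  unfolding monomial_subst_def deg_def ..

lemma ms_superset:
  assumes "finite A" "Poly_Mapping.keys p \<subseteq> A"
  shows "monomial_subst w p = (\<Sum>m\<in>A. monom (Poly_Mapping.lookup p m) (deg w m))"
  unfolding ms_def2
  by (rule sum.mono_neutral_left[OF assms]) (auto simp: not_in_keys_iff_lookup_eq_zero)

lemma ms_add: "monomial_subst w (p + q) = monomial_subst w p + monomial_subst w q"
proof -
  let ?A = "Poly_Mapping.keys p \<union> Poly_Mapping.keys q"
  have "monomial_subst w (p + q) = (\<Sum>m\<in>?A. monom (Poly_Mapping.lookup (p + q) m) (deg w m))"
    using keys_add[of p q] by (intro ms_superset) auto
  also have "\<dots> = (\<Sum>m\<in>?A. monom (Poly_Mapping.lookup p m) (deg w m)) + (\<Sum>m\<in>?A. monom (Poly_Mapping.lookup q m) (deg w m))"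
    by (simp add: lookup_add add_monom[symmetric] sum.distrib)
  also have "\<dots> = monomial_subst w p + monomial_subst w q"
    by (subst (1 2) ms_superset[of ?A]) auto
  finally show ?thesis .
qed

lemma ms_0: "monomial_subst w 0 = 0"
  unfolding monomial_subst_def by simp

lemma ms_sum: "monomial_subst w (\<Sum>x\<in>A. f x) = (\<Sum>x\<in>A. monomial_subst w (f x))"
  by (induction A rule: infinite_finite_induct) (simp_all add: ms_0 ms_add)

lemma ms_single: "monomial_subst w (Poly_Mapping.single m a) = monom a (deg w m)"
  by (subst ms_superset[of "{m}"]) auto

lemma pm_decomp: "p = (\<Sum>m\<in>Poly_Mapping.keys p. Poly_Mapping.single m (Poly_Mapping.lookup p m))"
proof (rule poly_mapping_eqI)
  fix k
  have "Poly_Mapping.lookup (\<Sum>m\<in>Poly_Mapping.keys p. Poly_Mapping.single m (Poly_Mapping.lookup p m)) k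
     = (\<Sum>m\<in>Poly_Mapping.keys p. if m = k then Poly_Mapping.lookup p m else 0)"
    by (simp add: lookup_sum lookup_single when_def)
  also have "\<dots> = Poly_Mapping.lookup p k"
    by (simp add: sum.delta not_in_keys_iff_lookup_eq_zero)
  finally show "Poly_Mapping.lookup p k = Poly_Mapping.lookup (\<Sum>m\<in>Poly_Mapping.keys p. Poly_Mapping.single m (Poly_Mapping.lookup p m)) k"
    by simp
qed

lemma deg_add: "deg w (m + n) = deg w m + deg w n"
  unfolding deg_def by (simp add: lookup_add add_mult_distrib sum.distrib)

lemma ms_mult: "monomial_subst w (p * q) = monomial_subst w p * monomial_subst w q"
proof -
  let ?P = "Poly_Mapping.keys p" and ?Q = "Poly_Mapping.keys q"
  have "p * q = (\<Sum>m\<in>?P. Poly_Mapping.single m (Poly_Mapping.lookup p m)) * (\<Sum>n\<in>?Q. Poly_Mapping.single n (Poly_Mapping.lookup q n))"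
    by (subst (1) pm_decomp[of p], subst (1) pm_decomp[of q]) (rule refl)
  also have "\<dots> = (\<Sum>m\<in>?P. \<Sum>n\<in>?Q. Poly_Mapping.single (m + n) (Poly_Mapping.lookup p m * Poly_Mapping.lookup q n))"
    by (simp add: sum_product mult_single)
  finally have pq: "p * q = \<dots>" .
  have "monomial_subst w (p * q) = (\<Sum>m\<in>?P. \<Sum>n\<in>?Q. monom (Poly_Mapping.lookup p m) (deg w m) * monom (Poly_Mapping.lookup q n) (deg w n))"
    unfolding pq by (simp add: ms_sum ms_single mult_monom deg_add)
  also have "\<dots> = monomial_subst w p * monomial_subst w q"
    unfolding ms_def2 by (simp add: sum_product)
  finally show ?thesis .
qed

lemma ms_1: "monomial_subst w 1 = 1"
proof -
  have "monomial_subst w 1 = monomial_subst w (Poly_Mapping.single 0 1)" by simp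
  also have "\<dots> = 1" unfolding ms_single by (simp add: deg_def monom_0 one_pCons)
  finally show ?thesis .
qed

lemma ms_power: "monomial_subst w (p ^ n) = monomial_subst w p ^ n"
  by (induction n) (simp_all add: ms_1 ms_mult)

lemma ms_diff: "monomial_subst w (p - q) = monomial_subst w p - monomial_subst w q"
proof -
  have "monomial_subst w (p - q) + monomial_subst w q = monomial_subst w p"
    using ms_add[of w "p - q" q] by simp
  then show ?thesis by (simp add: eq_diff_eq)
qed

lemma ms_Var: "monomial_subst w (Var v) = monom 1 (w v)"
  unfolding Var_def ms_single deg_def by (cases v) (simp_all add: lookup_single)

lemma Var_power: "(Var v :: 'k::comm_ring_1 mpoly4) ^ n = Poly_Mapping.single (Poly_Mapping.single v n) 1"
proof (induction n)
  case 0 then show ?case by simp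
next
  case (Suc n)
  then show ?case by (simp add: Var_def mult_single single_add[symmetric])
qed

lemma monomial_decomp:
  "(Poly_Mapping.single m 1 :: 'k::comm_ring_1 mpoly4) =
    Var X1 ^ Poly_Mapping.lookup m X1 * Var X2 ^ Poly_Mapping.lookup m X2 *
    Var X3 ^ Poly_Mapping.lookup m X3 * Var X4 ^ Poly_Mapping.lookup m X4"
proof -
  have "m = Poly_Mapping.single X1 (Poly_Mapping.lookup m X1) + Poly_Mapping.single X2 (Poly_Mapping.lookup m X2) +
     Poly_Mapping.single X3 (Poly_Mapping.lookup m X3) + Poly_Mapping.single X4 (Poly_Mapping.lookup m X4)"
  proof (rule poly_mapping_eqI)
    fix k show "Poly_Mapping.lookup m k = Poly_Mapping.lookup (Poly_Mapping.single X1 (Poly_Mapping.lookup m X1) + Poly_Mapping.single X2 (Poly_Mapping.lookup m X2) +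
     Poly_Mapping.single X3 (Poly_Mapping.lookup m X3) + Poly_Mapping.single X4 (Poly_Mapping.lookup m X4)) k"
      by (cases k) (simp_all add: lookup_add lookup_single)
  qed
  then show ?thesis
    by (simp add: Var_power mult_single)
qed

lemma rad_sum: "finite G \<Longrightarrow> (\<And>x. x \<in> A \<Longrightarrow> f x \<in> Rad G) \<Longrightarrow> sum f A \<in> Rad G"
proof (induction A rule: infinite_finite_induct)
  case (infinite A) then show ?case by (simp add: rad_base gen_ideal_0)
next
  case empty then show ?case by (simp add: rad_base gen_ideal_0)
next
  case (insert x F) then show ?case by (simp add: rad_add)
qed

theorem mainTheorem7:
  fixes a :: nat
  assumes "odd a" and "a \<ge> 7"
  shows "(toric_ideal (\<lambda>v. case v of X1 \<Rightarrow> 4 | X2 \<Rightarrow> 6 | X3 \<Rightarrow> a | X4 \<Rightarrow> a + 2)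
            :: 'k::field mpoly4 set)
    = radical (gen_ideal
        { Var X2 ^ (a - 2) - Var X1 ^ (a - 4) * Var X4 ^ 2,
          Var X3 ^ (a - 2) - Var X1 ^ 2 * Var X4 ^ (a - 4),
          Var X1 * Var X4 - Var X2 * Var X3,
          Var X1 ^ (a + 2) - Var X4 ^ 4,
          Var X4 ^ 2 - Var X1 * Var X3 ^ 2 })"
proof -
  obtain k where k: "a = 2 * k + 1" using assms(1) by (rule oddE)
  define c where "c = k - 3"
  have a: "a = 2 * c + 7" using k assms(2) unfolding c_def by arith
  have e: "a - 2 = 2*c+5" "a - 4 = 2*c+3" "a + 2 = 2*c+9" using a by simp_all
  define w where "w = (\<lambda>v. case v of X1 \<Rightarrow> 4 | X2 \<Rightarrow> (6::nat) | X3 \<Rightarrow> a | X4 \<Rightarrow> a + 2)"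
  interpret R: rels "Var X1 :: 'k mpoly4" "Var X2" "Var X3" "Var X4" c .
  have GG: "{ Var X2 ^ (a - 2) - Var X1 ^ (a - 4) * Var X4 ^ 2,
          Var X3 ^ (a - 2) - Var X1 ^ 2 * Var X4 ^ (a - 4),
          Var X1 * Var X4 - Var X2 * Var X3,
          Var X1 ^ (a + 2) - Var X4 ^ 4,
          Var X4 ^ 2 - Var X1 * Var X3 ^ 2 } = R.GG" unfolding R.GG_def e ..
  have degm: "deg w m = 4 * Poly_Mapping.lookup m X1 + 6 * Poly_Mapping.lookup m X2 + (2*c+7) * Poly_Mapping.lookup m X3 + (2*c+9) * Poly_Mapping.lookup m X4" for m
    unfolding deg_def w_def a by (simp add: algebra_simps)
  have gen0: "monomial_subst w g = 0" if "g \<in> R.GG" for g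
    using that unfolding R.GG_def
    by (elim insertE emptyE; hypsubst; simp add: ms_diff ms_mult ms_power ms_Var monom_power mult_monom w_def a algebra_simps)
  show ?thesis unfolding GG w_def[symmetric]
  proof (intro set_eqI iffI)
    fix p :: "'k mpoly4"
    assume "p \<in> R.J"
    then obtain n where "p ^ n \<in> gen_ideal R.GG" unfolding radical_def by blast
    then obtain cc where cc: "p ^ n = (\<Sum>g\<in>R.GG. cc g * g)" unfolding gen_ideal_def by blast
    have "monomial_subst w p ^ n = monomial_subst w (p ^ n)" by (simp add: ms_power)
    also have "\<dots> = (\<Sum>g\<in>R.GG. monomial_subst w (cc g) * monomial_subst w g)"
      unfolding cc by (simp add: ms_sum ms_mult)
    also have "\<dots> = 0" using gen0 by simp
    finally have "monomial_subst w p = 0" by simp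
    then show "p \<in> toric_ideal w" unfolding toric_ideal_def by simp
  next
    fix p :: "'k mpoly4"
    assume "p \<in> toric_ideal w"
    then have p0: "monomial_subst w p = 0" unfolding toric_ideal_def by simp
    define D where "D = (\<Sum>m\<in>Poly_Mapping.keys p. deg w m)"
    define psi where "psi = (\<lambda>q. \<Sum>d\<in>{..D}. Poly_Mapping.single 0 (coeff q d) * (R.Ef d :: 'k mpoly4))"
    have psi_add: "psi (q1 + q2) = psi q1 + psi q2" for q1 q2
      unfolding psi_def by (simp add: single_add distrib_right sum.distrib)
    have psi_0: "psi 0 = 0" unfolding psi_def by simp
    have psi_sum: "psi (\<Sum>x\<in>A. f x) = (\<Sum>x\<in>A. psi (f x))" for A and f :: "_ \<Rightarrow> 'k poly"
      by (induction A rule: infinite_finite_induct) (simp_all add: psi_0 psi_add)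
    have psi_monom: "psi (monom x n) = Poly_Mapping.single 0 x * R.Ef n" if "n \<le> D" for x n
    proof -
      have "psi (monom x n) = (\<Sum>d\<in>{..D}. if d = n then Poly_Mapping.single 0 x * R.Ef d else 0)"
        unfolding psi_def by (rule sum.cong) auto
      also have "\<dots> = Poly_Mapping.single 0 x * R.Ef n" using that by (simp add: sum.delta')
      finally show ?thesis .
    qed
    have degD: "deg w m \<le> D" if "m \<in> Poly_Mapping.keys p" for m
      unfolding D_def by (rule member_le_sum) (use that in auto)
    have "0 = psi (monomial_subst w p)" using p0 psi_0 by simp
    also have "\<dots> = (\<Sum>m\<in>Poly_Mapping.keys p. Poly_Mapping.single 0 (Poly_Mapping.lookup p m) * R.Ef (deg w m))"
      unfolding ms_def2 psi_sum using degD by (simp add: psi_monom)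
    finally have z: "(\<Sum>m\<in>Poly_Mapping.keys p. Poly_Mapping.single 0 (Poly_Mapping.lookup p m) * R.Ef (deg w m)) = 0" by simp
    have "p = (\<Sum>m\<in>Poly_Mapping.keys p. Poly_Mapping.single 0 (Poly_Mapping.lookup p m) * Poly_Mapping.single m 1)"
      by (subst pm_decomp) (simp add: mult_single)
    also have "\<dots> = (\<Sum>m\<in>Poly_Mapping.keys p. Poly_Mapping.single 0 (Poly_Mapping.lookup p m) * Poly_Mapping.single m 1) - 0" by simp
    also have "\<dots> = (\<Sum>m\<in>Poly_Mapping.keys p. Poly_Mapping.single 0 (Poly_Mapping.lookup p m) * (Poly_Mapping.single m 1 - R.Ef (deg w m)))"
      unfolding z[symmetric] by (simp add: sum_subtractf right_diff_distrib)
    also have "\<dots> \<in> R.J"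
    proof (rule rad_sum[OF R.finG])
      fix m
      have "Poly_Mapping.single m 1 - R.Ef (deg w m) \<in> R.J"
        unfolding monomial_decomp degm by (rule R.mono_Ef)
      then show "Poly_Mapping.single 0 (Poly_Mapping.lookup p m) * (Poly_Mapping.single m 1 - R.Ef (deg w m)) \<in> R.J"
        by (rule rad_mult)
    qed
    finally show "p \<in> R.J" .
  qed
qed

end
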